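(* Let $k\in\mathbb Z_{\ge1}$ and $\lambda_1,\lambda_2\in\mathbb C$. Then $\widetilde{\mathrm{Sol}}_{(k,k)}(-\lambda_1,-\lambda_2)\ne\{0\}$ if and only if $(\lambda_1,\lambda_2)=(\frac12(2-k-s),\frac12(2-k+s))$ for some $s\in\mathbb C$ (equivalently $\lambda_1+\lambda_2=2-k$), and in that case $\widetilde{\mathrm{Sol}}_{(k,k)}(-\frac12(2-k-s),-\frac12(2-k+s))=\mathbb C\,p_c^{(s;k)}(t)$.
   Context: Let $\vartheta_t=t\frac d{dt}$. For $a,b,\mu\in\mathbb C$ define $D^{(a,b)}(\mu;t)=\frac d{dt}+(\mu+a-\frac b2-1)(a-\vartheta_t)+\frac14t(a-1-\vartheta_t)(a-\vartheta_t)(b-\vartheta_t)$, and $D^{(a,b)}(\mu;-t)=-\frac d{dt}+(\mu+a-\frac b2-1)(a-\vartheta_t)-\frac14t(a-1-\vartheta_t)(a-\vartheta_t)(b-\vartheta_t)$ (substitution $t\mapsto -t$). For $k,\ell\in\mathbb Z_{\ge0}$, $\widetilde{\mathrm{Sol}}_{(k,\ell)}(-\lambda_1,-\lambda_2)=\{p\in\mathbb C[t]:\deg p\le\min(k,\ell),\ D^{(k,\ell)}(\lambda_1;t)p=0,\ D^{(\ell,k)}(\lambda_2;-t)p=0\}$. Cayley continuants: $\mathrm{Cay}_0(x;y)=1$, $\mathrm{Cay}_1(x;y)=x$, and for $m\ge2$, $\mathrm{Cay}_m(x;y)$ is the determinant of the $m\times m$ tridiagonal matrix with diagonal entries all $x$,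 superdiagonal entries $1,2,\dots,m-1$ and subdiagonal entries $y,y-1,\dots,y-m+2$; equivalently $\mathrm{Cay}_m(x;y)=\sum_{j=0}^m\binom mj(\frac{x+y}2)^{\underline j}(\frac{x-y}2)^{\overline{m-j}}$ with $r^{\underline j}=r(r-1)\cdots(r-j+1)$, $r^{\overline j}=r(r+1)\cdots(r+j-1)$. Polynomial: $p_c^{(s;k)}(t)=\sum_{m=0}^k\frac1{2^m}\binom km\mathrm{Cay}_m(s;k)t^m$. *)

theory Defs
  imports "HOL-Computational_Algebra.Polynomial"
begin

definition theta :: "complex poly \<Rightarrow> complex poly" where
  "theta p = [:0, 1:] * pderiv p"

definition cminus_theta :: "complex \<Rightarrow> complex poly \<Rightarrow> complex poly" where
  "cminus_theta c p = smult c p - theta p"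

definition Dop :: "complex \<Rightarrow> complex \<Rightarrow> complex \<Rightarrow> complex poly \<Rightarrow> complex poly" where
  "Dop a b mu p = pderiv p
     + smult (mu + a - b / 2 - 1) (cminus_theta a p)
     + smult (1/4) ([:0, 1:] * cminus_theta (a - 1) (cminus_theta a (cminus_theta b p)))"

text \<open>D^{(a,b)}(mu; -t) p  (substitution t to -t; theta_t is invariant)\<close>
definition Dop_neg :: "complex \<Rightarrow> complex \<Rightarrow> complex \<Rightarrow> complex poly \<Rightarrow> complex poly" where
  "Dop_neg a b mu p = - pderiv p
     + smult (mu + a - b / 2 - 1) (cminus_theta a p)
     - smult (1/4) ([:0, 1:] * cminus_theta (a - 1) (cminus_theta a (cminus_theta b p)))"

text \<open>Sol_tilde k l lam1 lam2 denotes the paper's widetilde Sol_{(k,l)}(-lam1,-lam2).\<close>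
definition Sol_tilde :: "nat \<Rightarrow> nat \<Rightarrow> complex \<Rightarrow> complex \<Rightarrow> complex poly set" where
  "Sol_tilde k l lam1 lam2 = {p. degree p \<le> min k l
      \<and> Dop (of_nat k) (of_nat l) lam1 p = 0
      \<and> Dop_neg (of_nat l) (of_nat k) lam2 p = 0}"

definition falling :: "complex \<Rightarrow> nat \<Rightarrow> complex" where
  "falling r j = (\<Prod>i<j. r - of_nat i)"

definition rising :: "complex \<Rightarrow> nat \<Rightarrow> complex" where
  "rising r j = (\<Prod>i<j. r + of_nat i)"

text \<open>Cayley continuant via the closed sum formula.\<close>
definition Cay :: "nat \<Rightarrow> complex \<Rightarrow> complex \<Rightarrow> complex" where
  "Cay m x y = (\<Sum>j\<le>m. of_nat (m choose j) * falling ((x + y) / 2) j * rising ((x - y) / 2) (m - j))"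

definition pc :: "complex \<Rightarrow> nat \<Rightarrow> complex poly" where
  "pc s k = (\<Sum>m\<le>k. monom (1 / 2 ^ m * of_nat (k choose m) * Cay m s (of_nat k)) m)"

end

theory Submission
  imports Defs
begin

lemma absorb_a:
  fixes h :: "nat \<Rightarrow> complex"
  shows "(\<Sum>j\<le>Suc m. of_nat (Suc m choose j) * of_nat (Suc m - j) * h j)
       = of_nat (Suc m) * (\<Sum>j\<le>m. of_nat (m choose j) * h j)"
proof -
  have "(\<Sum>j\<le>Suc m. of_nat (Suc m choose j) * of_nat (Suc m - j) * h j)
      = (\<Sum>j\<le>m. of_nat (Suc m choose j) * of_nat (Suc m - j) * h j)"
    by simp
  also have "\<dots> = (\<Sum>j\<le>m. of_nat (Suc m) * (of_nat (m choose j) * h j))"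
  proof (rule sum.cong[OF refl])
    fix j assume "j \<in> {..m}"
    have "(Suc m - j) * (Suc m choose j) = Suc m * (m choose j)"
      using binomial_absorb_comp[of "Suc m" j] by simp
    then have "(of_nat (Suc m - j) * of_nat (Suc m choose j) :: complex) = of_nat (Suc m) * of_nat (m choose j)"
      by (metis of_nat_mult)
    then show "of_nat (Suc m choose j) * of_nat (Suc m - j) * h j = of_nat (Suc m) * (of_nat (m choose j) * h j)"
      by (simp add: algebra_simps)
  qed
  finally show ?thesis by (simp add: sum_distrib_left)
qed

lemma absorb_b:
  fixes h :: "nat \<Rightarrow> complex"
  shows "(\<Sum>j\<le>Suc m. of_nat (Suc m choose j) * of_nat j * h j)
       = of_nat (Suc m) * (\<Sum>j\<le>m. of_nat (m choose j) * h (Suc j))"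
proof -
  have "(\<Sum>j\<le>Suc m. of_nat (Suc m choose j) * of_nat j * h j)
      = (\<Sum>j\<le>m. of_nat (Suc m choose Suc j) * of_nat (Suc j) * h (Suc j))"
    by (subst sum.atMost_Suc_shift) simp
  also have "\<dots> = (\<Sum>j\<le>m. of_nat (Suc m) * (of_nat (m choose j) * h (Suc j)))"
  proof (rule sum.cong[OF refl])
    fix j assume "j \<in> {..m}"
    have "(of_nat (Suc j) * of_nat (Suc m choose Suc j) :: complex) = of_nat (Suc m) * of_nat (m choose j)"
      by (metis Suc_times_binomial of_nat_mult)
    then show "of_nat (Suc m choose Suc j) * of_nat (Suc j) * h (Suc j) = of_nat (Suc m) * (of_nat (m choose j) * h (Suc j))"
      by (simp add: algebra_simps)
  qed
  finally show ?thesis by (simp add: sum_distrib_left)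
qed

lemma falling_Suc: "falling r (Suc j) = falling r j * (r - of_nat j)"
  by (simp add: falling_def)

lemma rising_Suc: "rising r (Suc j) = rising r j * (r + of_nat j)"
  by (simp add: rising_def)

lemma Cay_0: "Cay 0 x y = 1"
  by (simp add: Cay_def falling_def rising_def)

lemma Cay_1: "Cay 1 x y = x"
  by (simp add: Cay_def falling_def rising_def field_simps)

lemma Cay_step1:
  "Cay (Suc m) x y = (\<Sum>j\<le>m. of_nat (m choose j) * falling ((x + y) / 2) j * rising ((x - y) / 2) (m - j)
        * (x + of_nat (m - j) - of_nat j))"
proof -
  define A where "A = falling ((x + y) / 2)"
  define B where "B = rising ((x - y) / 2)"
  define h where "h j = A j * B (Suc m - j)" for j
  have "of_nat (Suc m) * Cay (Suc m) x y
     = (\<Sum>j\<le>Suc m. of_nat (Suc m choose j) * of_nat (Suc m - j) * h j)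
       + (\<Sum>j\<le>Suc m. of_nat (Suc m choose j) * of_nat j * h j)"
    unfolding Cay_def sum.distrib[symmetric] sum_distrib_left
    by (rule sum.cong[OF refl]) (auto simp: h_def A_def B_def algebra_simps of_nat_diff simp flip: of_nat_add)
  also have "\<dots> = of_nat (Suc m) * ((\<Sum>j\<le>m. of_nat (m choose j) * h j) + (\<Sum>j\<le>m. of_nat (m choose j) * h (Suc j)))"
    unfolding absorb_a absorb_b by (simp add: algebra_simps)
  also have "(\<Sum>j\<le>m. of_nat (m choose j) * h j) + (\<Sum>j\<le>m. of_nat (m choose j) * h (Suc j))
     = (\<Sum>j\<le>m. of_nat (m choose j) * A j * B (m - j) * (x + of_nat (m - j) - of_nat j))"
    unfolding sum.distrib[symmetric]
  proof (rule sum.cong[OF refl])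
    fix j assume "j \<in> {..m}"
    then have j: "j \<le> m" by simp
    then have e: "Suc m - j = Suc (m - j)" by simp
    show "of_nat (m choose j) * h j + of_nat (m choose j) * h (Suc j) =
         of_nat (m choose j) * A j * B (m - j) * (x + of_nat (m - j) - of_nat j)"
      unfolding h_def e A_def B_def falling_Suc rising_Suc by (simp add: field_simps)
  qed
  finally show ?thesis unfolding A_def B_def by (simp del: of_nat_Suc)
qed

lemma Cay_rec:
  "Cay (Suc (Suc m)) x y = x * Cay (Suc m) x y - of_nat (Suc m) * (y - of_nat m) * Cay m x y"
proof -
  define A where "A = falling ((x + y) / 2)"
  define B where "B = rising ((x - y) / 2)"
  define h where "h j = A j * B (Suc m - j)" for j
  have c1: "Cay (Suc (Suc m)) x y - x * Cay (Suc m) x y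
     = (\<Sum>j\<le>Suc m. of_nat (Suc m choose j) * of_nat (Suc m - j) * h j)
       - (\<Sum>j\<le>Suc m. of_nat (Suc m choose j) * of_nat j * h j)"
    unfolding Cay_step1[of "Suc m"] Cay_def[of "Suc m"] sum.distrib[symmetric] sum_distrib_left sum_subtractf[symmetric]
    by (rule sum.cong[OF refl]) (auto simp: h_def A_def B_def algebra_simps)
  also have "\<dots> = of_nat (Suc m) * ((\<Sum>j\<le>m. of_nat (m choose j) * h j) - (\<Sum>j\<le>m. of_nat (m choose j) * h (Suc j)))"
    unfolding absorb_a absorb_b by (simp add: algebra_simps)
  also have "(\<Sum>j\<le>m. of_nat (m choose j) * h j) - (\<Sum>j\<le>m. of_nat (m choose j) * h (Suc j))
     = (\<Sum>j\<le>m. of_nat (m choose j) * A j * B (m - j) * ((x - y) / 2 - (x + y) / 2 + of_nat m))"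
    unfolding sum_subtractf[symmetric]
  proof (rule sum.cong[OF refl])
    fix j assume "j \<in> {..m}"
    then have j: "j \<le> m" by simp
    then have e: "Suc m - j = Suc (m - j)" by simp
    show "of_nat (m choose j) * h j - of_nat (m choose j) * h (Suc j) =
         of_nat (m choose j) * A j * B (m - j) * ((x - y) / 2 - (x + y) / 2 + of_nat m)"
      unfolding h_def e A_def B_def falling_Suc rising_Suc using j by (simp add: field_simps of_nat_diff)
  qed
  also have "\<dots> = ((x - y) / 2 - (x + y) / 2 + of_nat m) * Cay m x y"
    unfolding Cay_def sum_distrib_left A_def B_def by (rule sum.cong[OF refl]) (simp add: algebra_simps)
  finally show ?thesis by (simp add: field_simps)
qed

lemma X_mult: "[:0, 1:] * (q :: complex poly) = pCons 0 q"
  by (simp add: mult_pCons_left smult_one)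

lemma coeff_ct: "coeff (cminus_theta c p) n = (c - of_nat n) * coeff p n"
  by (cases n) (simp_all add: cminus_theta_def theta_def coeff_pderiv algebra_simps X_mult coeff_pCons)

definition low :: "complex \<Rightarrow> complex \<Rightarrow> complex poly \<Rightarrow> nat \<Rightarrow> complex" where
  "low a b p n = (if n = 0 then 0 else
     (a - 1 - of_nat (n - 1)) * (a - of_nat (n - 1)) * (b - of_nat (n - 1)) * coeff p (n - 1))"

lemma coeff_Xq: "coeff ([:0, 1:] * cminus_theta (a - 1) (cminus_theta a (cminus_theta b p))) n = low a b p n"
  unfolding X_mult low_def by (cases n) (simp_all add: coeff_ct coeff_pCons)

lemma coeff_Dop: "coeff (Dop a b mu p) n = of_nat (Suc n) * coeff p (Suc n)
   + (mu + a - b / 2 - 1) * ((a - of_nat n) * coeff p n) + 1/4 * low a b p n"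
  unfolding Dop_def by (simp only: coeff_add coeff_smult coeff_pderiv coeff_ct coeff_Xq)

lemma coeff_Dop_neg: "coeff (Dop_neg a b mu p) n = - (of_nat (Suc n) * coeff p (Suc n))
   + (mu + a - b / 2 - 1) * ((a - of_nat n) * coeff p n) - 1/4 * low a b p n"
  unfolding Dop_neg_def by (simp only: coeff_add coeff_diff coeff_minus coeff_smult coeff_pderiv coeff_ct coeff_Xq)

lemma Dop_sum: "Dop a a l1 p + Dop_neg a a l2 p = smult (l1 + l2 + a - 2) (cminus_theta a p)"
  by (rule poly_eqI) (simp add: coeff_Dop coeff_Dop_neg coeff_ct algebra_simps)

lemma Dop_lin: "Dop a b mu (p - smult c q) = Dop a b mu p - smult c (Dop a b mu q)"
  by (rule poly_eqI) (simp add: coeff_Dop low_def algebra_simps)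

lemma Dop_smult: "Dop a b mu (smult c q) = smult c (Dop a b mu q)"
  by (rule poly_eqI) (simp add: coeff_Dop low_def algebra_simps)

lemma Dop_neg_smult: "Dop_neg a b mu (smult c q) = smult c (Dop_neg a b mu q)"
  by (rule poly_eqI) (simp add: coeff_Dop_neg low_def algebra_simps)

lemma coeff_pc: "coeff (pc s k) n = 1 / 2 ^ n * of_nat (k choose n) * Cay n s (of_nat k)"
proof -
  have "coeff (pc s k) n = (\<Sum>m\<le>k. if n = m then 1 / 2 ^ m * of_nat (k choose m) * Cay m s (of_nat k) else 0)"
    unfolding pc_def coeff_sum coeff_monom by (rule sum.cong) auto
  also have "\<dots> = (if n \<le> k then 1 / 2 ^ n * of_nat (k choose n) * Cay n s (of_nat k) else 0)"
    by (simp add: sum.delta)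
  finally show ?thesis by simp
qed

lemma coeff_pc0: "coeff (pc s k) 0 = 1"
  by (simp add: coeff_pc Cay_0)

lemma degree_pc: "degree (pc s k) \<le> k"
  by (rule degree_le) (simp add: coeff_pc)

lemma B2: "(of_nat (Suc m) * of_nat (k choose Suc m) :: complex) = (of_nat k - of_nat m) * of_nat (k choose m)"
proof (cases "m \<le> k")
  case True
  have "Suc m * (k choose Suc m) = (k - m) * (k choose m)"
    by (metis binomial_absorb_comp binomial_absorption)
  then have "(of_nat (Suc m) * of_nat (k choose Suc m) :: complex) = of_nat (k - m) * of_nat (k choose m)"
    by (metis of_nat_mult)
  then show ?thesis using True by (simp add: of_nat_diff)
next
  case False
  then show ?thesis by (simp add: binomial_eq_0)
qed

lemma pc_sol: "Dop (of_nat k) (of_nat k) ((2 - of_nat k - s) / 2) (pc s k) = 0"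
proof (rule poly_eqI)
  fix n
  show "coeff (Dop (of_nat k) (of_nat k) ((2 - of_nat k - s) / 2) (pc s k)) n = coeff 0 n"
  proof (cases n)
    case 0
    then show ?thesis by (simp add: coeff_Dop low_def coeff_pc Cay_0 Cay_1[simplified] field_simps)
  next
    case (Suc m)
    define C0 where "C0 = (of_nat (k choose m) :: complex)"
    define C1 where "C1 = (of_nat (k choose Suc m) :: complex)"
    define C2 where "C2 = (of_nat (k choose Suc (Suc m)) :: complex)"
    define Y0 where "Y0 = Cay m s (of_nat k)"
    define Y1 where "Y1 = Cay (Suc m) s (of_nat k)"
    define Y2 where "Y2 = Cay (Suc (Suc m)) s (of_nat k)"
    define P where "P = (2::complex) ^ m"
    have P: "P \<noteq> 0" by (simp add: P_def)
    have b1: "of_nat (Suc (Suc m)) * C2 = (of_nat k - of_nat m - 1) * C1"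
      unfolding C1_def C2_def using B2[of "Suc m" k] by simp
    have b2: "of_nat (Suc m) * C1 = (of_nat k - of_nat m) * C0"
      unfolding C1_def C0_def using B2[of m k] by simp
    have y: "Y2 = s * Y1 - of_nat (Suc m) * (of_nat k - of_nat m) * Y0"
      unfolding Y0_def Y1_def Y2_def by (rule Cay_rec)
    have "coeff (Dop (of_nat k) (of_nat k) ((2 - of_nat k - s) / 2) (pc s k)) n
       = of_nat (Suc (Suc m)) * (1 / (4 * P) * C2 * Y2)
         - s / 2 * ((of_nat k - of_nat (Suc m)) * (1 / (2 * P) * C1 * Y1))
         + 1/4 * ((of_nat k - 1 - of_nat m) * (of_nat k - of_nat m) * (of_nat k - of_nat m) * (1 / P * C0 * Y0))"
      unfolding Suc coeff_Dop low_def coeff_pc C0_def C1_def C2_def Y0_def Y1_def Y2_def P_def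
      by (simp add: field_simps)
    also have "\<dots> = (of_nat k - of_nat m - 1) * C1 * (Y2 - s * Y1 + (of_nat k - of_nat m) * of_nat (Suc m) * Y0) / (4 * P)"
    proof -
      have t1: "of_nat (Suc (Suc m)) * (1 / (4 * P) * C2 * Y2) = (of_nat k - of_nat m - 1) * C1 * Y2 / (4 * P)"
      proof -
        have "of_nat (Suc (Suc m)) * (1 / (4 * P) * C2 * Y2) = (of_nat (Suc (Suc m)) * C2) * Y2 / (4 * P)"
          by simp
        also have "\<dots> = (of_nat k - of_nat m - 1) * C1 * Y2 / (4 * P)" by (simp only: b1)
        finally show ?thesis .
      qed
      have t3: "(of_nat k - 1 - of_nat m) * (of_nat k - of_nat m) * (of_nat k - of_nat m) * (1 / P * C0 * Y0)
          = (of_nat k - 1 - of_nat m) * (of_nat k - of_nat m) * (of_nat (Suc m) * C1) * Y0 / P"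
      proof -
        have "(of_nat k - 1 - of_nat m) * (of_nat k - of_nat m) * (of_nat k - of_nat m) * (1 / P * C0 * Y0)
          = (of_nat k - 1 - of_nat m) * (of_nat k - of_nat m) * ((of_nat k - of_nat m) * C0) * Y0 / P"
          by simp
        also have "\<dots> = (of_nat k - 1 - of_nat m) * (of_nat k - of_nat m) * (of_nat (Suc m) * C1) * Y0 / P"
          by (simp only: b2)
        finally show ?thesis .
      qed
      show ?thesis unfolding t1 t3 using P by (simp add: field_simps)
    qed
    also have "\<dots> = 0" unfolding y by (simp add: algebra_simps)
    finally show ?thesis by simp
  qed
qed

lemma Dop_zero: "Dop a b mu 0 = 0"
  by (rule poly_eqI) (simp add: coeff_Dop low_def)

lemma Dop_neg_zero: "Dop_neg a b mu 0 = 0"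
  by (rule poly_eqI) (simp add: coeff_Dop_neg low_def)

lemma uniq:
  assumes D: "Dop a b mu q = 0" and q0: "coeff q 0 = 0"
  shows "q = 0"
proof -
  have "coeff q n = 0 \<and> coeff q (Suc n) = 0" for n
  proof (induction n)
    case 0
    have "coeff (Dop a b mu q) 0 = 0" using D by simp
    then show ?case using q0 by (simp add: coeff_Dop low_def)
  next
    case (Suc n)
    have "coeff (Dop a b mu q) (Suc n) = 0" using D by simp
    then have "of_nat (Suc (Suc n)) * coeff q (Suc (Suc n)) = 0"
      using Suc by (simp add: coeff_Dop low_def)
    then show ?case using Suc by (simp del: of_nat_Suc)
  qed
  then show ?thesis by (simp add: poly_eq_iff)
qed

lemma part2:
  "Sol_tilde k k ((2 - of_nat k - s) / 2) ((2 - of_nat k + s) / 2) = range (\<lambda>c. smult c (pc s k))"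
proof -
  define l1 where "l1 = (2 - of_nat k - s) / (2::complex)"
  define l2 where "l2 = (2 - of_nat k + s) / (2::complex)"
  have sum0: "l1 + l2 + of_nat k - 2 = 0" unfolding l1_def l2_def by (simp add: field_simps)
  have neg: "Dop_neg (of_nat k) (of_nat k) l2 p = - Dop (of_nat k) (of_nat k) l1 p" for p
    using Dop_sum[of "of_nat k" l1 p l2] sum0 by (simp add: eq_neg_iff_add_eq_0 add.commute)
  have pcs: "Dop (of_nat k) (of_nat k) l1 (pc s k) = 0" unfolding l1_def by (rule pc_sol)
  have "Sol_tilde k k l1 l2 = range (\<lambda>c. smult c (pc s k))"
  proof
    show "Sol_tilde k k l1 l2 \<subseteq> range (\<lambda>c. smult c (pc s k))"
    proof
      fix p assume "p \<in> Sol_tilde k k l1 l2"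
      then have D: "Dop (of_nat k) (of_nat k) l1 p = 0" by (simp add: Sol_tilde_def)
      define q where "q = p - smult (coeff p 0) (pc s k)"
      have "Dop (of_nat k) (of_nat k) l1 q = 0" unfolding q_def Dop_lin D pcs by simp
      moreover have "coeff q 0 = 0" unfolding q_def by (simp add: coeff_pc0)
      ultimately have "q = 0" by (rule uniq)
      then have "p = smult (coeff p 0) (pc s k)" unfolding q_def by simp
      then show "p \<in> range (\<lambda>c. smult c (pc s k))" by blast
    qed
  next
    show "range (\<lambda>c. smult c (pc s k)) \<subseteq> Sol_tilde k k l1 l2"
    proof
      fix p assume "p \<in> range (\<lambda>c. smult c (pc s k))"
      then obtain c where p: "p = smult c (pc s k)" by blast
      have "degree p \<le> k" unfolding p using degree_pc[of s k] degree_smult_le[of c "pc s k"] by linarith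
      moreover have "Dop (of_nat k) (of_nat k) l1 p = 0" unfolding p Dop_smult pcs by simp
      moreover have "Dop_neg (of_nat k) (of_nat k) l2 p = 0" unfolding neg p Dop_smult pcs by simp
      ultimately show "p \<in> Sol_tilde k k l1 l2" by (simp add: Sol_tilde_def)
    qed
  qed
  then show ?thesis unfolding l1_def l2_def .
qed

lemma part1:
  assumes "k \<ge> 1"
  shows "Sol_tilde k k lam1 lam2 \<noteq> {0} \<longleftrightarrow>
           (\<exists>s. lam1 = (2 - of_nat k - s) / 2 \<and> lam2 = (2 - of_nat k + s) / 2)"
proof
  assume ne: "Sol_tilde k k lam1 lam2 \<noteq> {0}"
  have z: "0 \<in> Sol_tilde k k lam1 lam2" by (simp add: Sol_tilde_def Dop_zero Dop_neg_zero)
  obtain p where p: "p \<in> Sol_tilde k k lam1 lam2" "p \<noteq> 0" using ne z by blast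
  show "\<exists>s. lam1 = (2 - of_nat k - s) / 2 \<and> lam2 = (2 - of_nat k + s) / 2"
  proof (cases "lam1 + lam2 + of_nat k - 2 = 0")
    case True
    have h: "lam2 = 2 - of_nat k - lam1" using True by (simp add: algebra_simps eq_diff_eq)
    show ?thesis
      by (rule exI[of _ "2 - of_nat k - 2 * lam1"]) (simp add: h field_simps)
  next
    case False
    have D: "Dop (of_nat k) (of_nat k) lam1 p = 0" "Dop_neg (of_nat k) (of_nat k) lam2 p = 0"
      using p by (auto simp: Sol_tilde_def)
    have "smult (lam1 + lam2 + of_nat k - 2) (cminus_theta (of_nat k) p) = 0"
      using Dop_sum[of "of_nat k" lam1 p lam2] D by simp
    then have ct: "cminus_theta (of_nat k) p = 0" using False by simp
    have cz: "coeff p n = 0" if "n \<noteq> k" for n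
    proof -
      have "coeff (cminus_theta (of_nat k) p) n = 0" using ct by simp
      then show ?thesis using that by (simp add: coeff_ct)
    qed
    obtain k' where k': "k = Suc k'" using assms by (cases k) auto
    have "coeff (Dop (of_nat k) (of_nat k) lam1 p) k' = 0" using D by simp
    moreover have "coeff p (k' - 1) = 0" "coeff p (k' - Suc 0) = 0" "coeff p k' = 0" using cz k' by auto
    ultimately have "of_nat k * coeff p k = 0"
      using k' by (simp add: coeff_Dop low_def del: of_nat_Suc split: if_splits)
    then have "coeff p k = 0" using assms by simp
    then have "p = 0" using cz by (metis poly_eqI coeff_0)
    then show ?thesis using p by simp
  qed
next
  assume "\<exists>s. lam1 = (2 - of_nat k - s) / 2 \<and> lam2 = (2 - of_nat k + s) / 2"
  then obtain s where s: "lam1 = (2 - of_nat k - s) / 2" "lam2 = (2 - of_nat k + s) / 2" by blast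
  have "pc s k \<in> Sol_tilde k k lam1 lam2" unfolding s part2
    by (rule range_eqI[where x="1::complex"]) simp
  moreover have "pc s k \<noteq> 0" using coeff_pc0[of s k] by auto
  ultimately show "Sol_tilde k k lam1 lam2 \<noteq> {0}" by blast
qed

theorem proposition6p4:
  fixes k :: nat and lam1 lam2 :: complex
  assumes "k \<ge> 1"
  shows "(Sol_tilde k k lam1 lam2 \<noteq> {0} \<longleftrightarrow>
           (\<exists>s. lam1 = (2 - of_nat k - s) / 2 \<and> lam2 = (2 - of_nat k + s) / 2))
     \<and> (\<forall>s. Sol_tilde k k ((2 - of_nat k - s) / 2) ((2 - of_nat k + s) / 2)
              = range (\<lambda>c. smult c (pc s k)))"
  using part1[OF assms] part2 by blast

end
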